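(* Let $f:\{0,1\}^n\to\{\pm1\}$ be $k$-monotone. Then $\sum_{r=0}^{n-1}\mathbf I[f|_r]\le kn$.
   Context: A function $g:\{0,1\}^n\to\{0,1\}$ is monotone if $x\preceq y$ coordinatewise implies $g(x)\le g(y)$; it is $k$-monotone if it is the XOR of $k$ monotone functions. $f:\{0,1\}^n\to\{\pm1\}$ is $k$-monotone if $(1-f)/2$ is $k$-monotone. For $0\le r\le n$, $\binom{[n]}{r}=\{x\in\{0,1\}^n:\sum_ix_i=r\}$ with the uniform distribution and $f|_r$ is the restriction of $f$ to it. For $g:\binom{[n]}{r}\to\{\pm1\}$ and $i,j\in[n]$, $\mathbf I_{ij}[g]=2\Pr_x[g(x^{(i,j)})\ne g(x)]$, where $x$ is uniform on the slice and $x^{(i,j)}$ is $x$ with coordinates $i$ and $j$ swapped; the total influence is $\mathbf I[g]=\frac1n\sum_{1\le i<j\le n}\mathbf I_{ij}[g]$. *)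

theory Defs
  imports Complex_Main
begin

text \<open>Points of the cube {0,1}^n are represented as functions nat => bool
  (True = 1) that vanish outside the coordinates 0..n-1.\<close>

definition cube :: "nat \<Rightarrow> (nat \<Rightarrow> bool) set" where
  "cube n = {x. \<forall>i. n \<le> i \<longrightarrow> \<not> x i}"

definition bool_monotone :: "nat \<Rightarrow> ((nat \<Rightarrow> bool) \<Rightarrow> bool) \<Rightarrow> bool" where
  "bool_monotone n g \<longleftrightarrow>
     (\<forall>x\<in>cube n. \<forall>y\<in>cube n. (\<forall>i<n. x i \<longrightarrow> y i) \<longrightarrow> (g x \<longrightarrow> g y))"

definition k_monotone :: "nat \<Rightarrow> nat \<Rightarrow> ((nat \<Rightarrow> bool) \<Rightarrow> bool) \<Rightarrow> bool" where
  "k_monotone n k g \<longleftrightarrow>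
     (\<exists>gs :: nat \<Rightarrow> (nat \<Rightarrow> bool) \<Rightarrow> bool.
        (\<forall>j<k. bool_monotone n (gs j)) \<and>
        (\<forall>x\<in>cube n. g x = odd (card {j. j < k \<and> gs j x})))"

text \<open>f : {0,1}^n -> {+-1} is k-monotone iff (1-f)/2 is, i.e. the indicator of f x = -1.\<close>
definition pm_k_monotone :: "nat \<Rightarrow> nat \<Rightarrow> ((nat \<Rightarrow> bool) \<Rightarrow> real) \<Rightarrow> bool" where
  "pm_k_monotone n k f \<longleftrightarrow> k_monotone n k (\<lambda>x. (1 - f x) / 2 = 1)"

definition slice :: "nat \<Rightarrow> nat \<Rightarrow> (nat \<Rightarrow> bool) set" where
  "slice n r = {x \<in> cube n. card {i. i < n \<and> x i} = r}"

definition swap_coords :: "nat \<Rightarrow> nat \<Rightarrow> (nat \<Rightarrow> bool) \<Rightarrow> (nat \<Rightarrow> bool)" where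
  "swap_coords i j x = (\<lambda>l. if l = i then x j else if l = j then x i else x l)"

definition slice_inf_ij :: "nat \<Rightarrow> nat \<Rightarrow> ((nat \<Rightarrow> bool) \<Rightarrow> real) \<Rightarrow> nat \<Rightarrow> nat \<Rightarrow> real" where
  "slice_inf_ij n r g i j =
     2 * real (card {x \<in> slice n r. g (swap_coords i j x) \<noteq> g x}) / real (card (slice n r))"

definition slice_total_inf :: "nat \<Rightarrow> nat \<Rightarrow> ((nat \<Rightarrow> bool) \<Rightarrow> real) \<Rightarrow> real" where
  "slice_total_inf n r g =
     (1 / real n) * (\<Sum>j<n. \<Sum>i<j. slice_inf_ij n r g i j)"

end

theory Submission
  imports Defs
begin

lemma finite_cube: "finite (cube n)"
proof -
  have "cube n \<subseteq> (\<lambda>S i. i \<in> S) ` Pow {..<n}"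
  proof
    fix x assume x: "x \<in> cube n"
    have "x = (\<lambda>i. i \<in> {i. i < n \<and> x i})"
      using x by (auto simp: cube_def fun_eq_iff not_le[symmetric])
    moreover have "{i. i < n \<and> x i} \<in> Pow {..<n}" by auto
    ultimately show "x \<in> (\<lambda>S i. i \<in> S) ` Pow {..<n}" by blast
  qed
  then show ?thesis by (rule finite_subset) auto
qed

lemma finite_slice: "finite (slice n r)"
  using finite_cube[of n] unfolding slice_def by auto

lemma slice_ne: "r \<le> n \<Longrightarrow> slice n r \<noteq> {}"
proof -
  assume "r \<le> n"
  then have "{i. i < n \<and> i < r} = {..<r}" by auto
  then have "(\<lambda>i. i < r) \<in> slice n r" using \<open>r \<le> n\<close>
    by (auto simp: slice_def cube_def)
  then show ?thesis by blast
qed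

lemma card_slice_pos: "r \<le> n \<Longrightarrow> card (slice n r) > 0"
  using slice_ne finite_slice by (simp add: card_gt_0_iff)

lemma card_zeros:
  assumes "x \<in> slice n r"
  shows "card {i. i < n \<and> \<not> x i} = n - r"
proof -
  have "{i. i < n \<and> \<not> x i} = {..<n} - {i. i < n \<and> x i}" by auto
  moreover have "card {i. i < n \<and> x i} = r" using assms by (simp add: slice_def)
  ultimately show ?thesis by (simp add: card_Diff_subset subset_iff)
qed

lemma up_slice:
  assumes "x \<in> slice n r" "i < n" "\<not> x i"
  shows "x(i := True) \<in> slice n (Suc r)"
proof -
  have "{l. l < n \<and> (x(i := True)) l} = insert i {l. l < n \<and> x l}" using assms by auto
  moreover have "card {l. l < n \<and> x l} = r" using assms by (simp add: slice_def)
  ultimately have "card {l. l < n \<and> (x(i := True)) l} = Suc r" using assms by simp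
  moreover have "x(i := True) \<in> cube n" using assms by (auto simp: slice_def cube_def)
  ultimately show ?thesis by (simp add: slice_def)
qed

lemma down_slice:
  assumes "y \<in> slice n (Suc r)" "i < n" "y i"
  shows "y(i := False) \<in> slice n r"
proof -
  have "{l. l < n \<and> (y(i := False)) l} = {l. l < n \<and> y l} - {i}" by auto
  moreover have "card {l. l < n \<and> y l} = Suc r" using assms by (simp add: slice_def)
  ultimately have "card {l. l < n \<and> (y(i := False)) l} = r" using assms by simp
  moreover have "y(i := False) \<in> cube n" using assms by (auto simp: slice_def cube_def)
  ultimately show ?thesis by (simp add: slice_def)
qed

definition Pe :: "nat \<Rightarrow> nat \<Rightarrow> ((nat \<Rightarrow> bool) \<times> nat) set" where
  "Pe n r = Sigma (slice n r) (\<lambda>x. {i. i < n \<and> \<not> x i})"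

definition De :: "nat \<Rightarrow> nat \<Rightarrow> ((nat \<Rightarrow> bool) \<Rightarrow> 'b) \<Rightarrow> ((nat \<Rightarrow> bool) \<times> nat) set" where
  "De n r g = {p \<in> Pe n r. g ((fst p)(snd p := True)) \<noteq> g (fst p)}"

lemma finite_Pe: "finite (Pe n r)"
  unfolding Pe_def using finite_slice by (intro finite_SigmaI) auto

lemma finite_De: "finite (De n r g)"
  unfolding De_def using finite_Pe by auto

lemma card_Pe: "card (Pe n r) = card (slice n r) * (n - r)"
  unfolding Pe_def using finite_slice card_zeros by (simp add: finite_slice)

lemma card_Sigma_ones:
  assumes "S \<subseteq> slice n s"
  shows "card (Sigma S (\<lambda>y. {i. i < n \<and> y i})) = card S * s"
proof -
  have fS: "finite S" using assms finite_slice finite_subset by blast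
  have "\<forall>y\<in>S. card {i. i < n \<and> y i} = s" using assms by (auto simp: slice_def)
  then show ?thesis using fS by simp
qed

definition upf :: "(nat \<Rightarrow> bool) \<times> nat \<Rightarrow> (nat \<Rightarrow> bool) \<times> nat" where
  "upf p = ((fst p)(snd p := True), snd p)"

lemma inj_upf: "inj_on upf (Pe n r)"
proof (rule inj_onI)
  fix p q assume p: "p \<in> Pe n r" and q: "q \<in> Pe n r" and e: "upf p = upf q"
  obtain x i where pp: "p = (x, i)" by (cases p)
  obtain y j where qq: "q = (y, j)" by (cases q)
  have ij: "i = j" using e by (simp add: upf_def pp qq)
  have "x(i := True) = y(i := True)" using e by (simp add: upf_def pp qq ij)
  moreover have "\<not> x i" "\<not> y i" using p q by (auto simp: Pe_def pp qq ij)
  ultimately have "x = y"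
  proof (intro ext)
    fix l assume a: "x(i := True) = y(i := True)" and b: "\<not> x i" "\<not> y i"
    show "x l = y l"
    proof (cases "l = i")
      case True then show ?thesis using b by simp
    next
      case False then show ?thesis using fun_cong[OF a, of l] by simp
    qed
  qed
  then show "p = q" using pp qq ij by simp
qed

lemma upf_image:
  "upf ` {p \<in> Pe n r. g (fst (upf p))} = Sigma {y \<in> slice n (Suc r). g y} (\<lambda>y. {i. i < n \<and> y i})"
proof
  show "upf ` {p \<in> Pe n r. g (fst (upf p))} \<subseteq> Sigma {y \<in> slice n (Suc r). g y} (\<lambda>y. {i. i < n \<and> y i})"
  proof
    fix q assume "q \<in> upf ` {p \<in> Pe n r. g (fst (upf p))}"
    then obtain x i where xi: "(x, i) \<in> Pe n r" "g (x(i := True))" "q = (x(i := True), i)"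
      by (auto simp: upf_def)
    then have "x \<in> slice n r" "i < n" "\<not> x i" by (auto simp: Pe_def)
    then show "q \<in> Sigma {y \<in> slice n (Suc r). g y} (\<lambda>y. {i. i < n \<and> y i})"
      using xi up_slice by auto
  qed
next
  show "Sigma {y \<in> slice n (Suc r). g y} (\<lambda>y. {i. i < n \<and> y i}) \<subseteq> upf ` {p \<in> Pe n r. g (fst (upf p))}"
  proof
    fix q assume q: "q \<in> Sigma {y \<in> slice n (Suc r). g y} (\<lambda>y. {i. i < n \<and> y i})"
    obtain y i where qq: "q = (y, i)" by (cases q)
    have yi: "y \<in> slice n (Suc r)" "g y" "i < n" "y i" using q qq by auto
    have "(y(i := False), i) \<in> Pe n r" using down_slice[OF yi(1,3,4)] yi by (simp add: Pe_def)
    moreover have "upf (y(i := False), i) = q" using yi qq by (simp add: upf_def fun_upd_idem)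
    ultimately show "q \<in> upf ` {p \<in> Pe n r. g (fst (upf p))}" using yi
      by (intro image_eqI[where x="(y(i:=False),i)"]) (auto simp: upf_def fun_upd_idem)
  qed
qed

lemma card_U: "card {p \<in> Pe n r. g (fst (upf p))} = card {y \<in> slice n (Suc r). g y} * Suc r"
proof -
  have "card {p \<in> Pe n r. g (fst (upf p))} = card (upf ` {p \<in> Pe n r. g (fst (upf p))})"
    by (rule card_image[symmetric]) (rule inj_on_subset[OF inj_upf], auto)
  also have "\<dots> = card (Sigma {y \<in> slice n (Suc r). g y} (\<lambda>y. {i. i < n \<and> y i}))"
    by (simp only: upf_image)
  also have "\<dots> = card {y \<in> slice n (Suc r). g y} * Suc r"
    by (rule card_Sigma_ones) auto
  finally show ?thesis .
qed

lemma card_L: "card {p \<in> Pe n r. g (fst p)} = card {y \<in> slice n r. g y} * (n - r)"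
proof -
  have "{p \<in> Pe n r. g (fst p)} = Sigma {y \<in> slice n r. g y} (\<lambda>x. {i. i < n \<and> \<not> x i})"
    by (auto simp: Pe_def)
  moreover have "finite {y \<in> slice n r. g y}" using finite_slice by auto
  moreover have "(\<Sum>a\<in>{y \<in> slice n r. g y}. card {i. i < n \<and> \<not> a i}) = (\<Sum>a\<in>{y \<in> slice n r. g y}. n - r)"
    by (rule sum.cong) (auto simp: card_zeros)
  ultimately show ?thesis by simp
qed


lemma De_mono_card:
  assumes mono: "bool_monotone n g" and rn: "r < n"
  shows "real (card (De n r g)) / real (card (Pe n r)) =
    real (card {y \<in> slice n (Suc r). g y}) / real (card (slice n (Suc r))) -
    real (card {y \<in> slice n r. g y}) / real (card (slice n r))"
proof -
  define U where "U = {p \<in> Pe n r. g (fst (upf p))}"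
  define L where "L = {p \<in> Pe n r. g (fst p)}"
  have LU: "L \<subseteq> U"
  proof
    fix p assume "p \<in> L"
    then obtain x i where p: "p = (x, i)" "x \<in> slice n r" "i < n" "\<not> x i" "g x"
      by (cases p) (auto simp: L_def Pe_def)
    have c1: "x \<in> cube n" using p by (simp add: slice_def)
    have c2: "x(i := True) \<in> cube n" using up_slice[OF p(2,3,4)] by (simp add: slice_def)
    have "g (x(i := True))" using mono c1 c2 p(5) unfolding bool_monotone_def by auto
    then show "p \<in> U" using \<open>p \<in> L\<close> p(1) by (simp add: U_def L_def upf_def)
  qed
  have DUL: "De n r g = U - L" using LU by (auto simp: De_def U_def L_def upf_def)
  have fU: "finite U" using finite_Pe by (simp add: U_def)
  have cD: "card (De n r g) = card U - card L"
    using DUL LU fU by (simp add: card_Diff_subset finite_subset)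
  have cLU: "card L \<le> card U" using LU fU by (simp add: card_mono)
  define A1 where "A1 = card {y \<in> slice n (Suc r). g y}"
  define A0 where "A0 = card {y \<in> slice n r. g y}"
  define N1 where "N1 = card (slice n (Suc r))"
  define N0 where "N0 = card (slice n r)"
  have cU: "card U = A1 * Suc r" unfolding U_def A1_def by (rule card_U)
  have cL: "card L = A0 * (n - r)" unfolding L_def A0_def by (rule card_L)
  have P1: "card (Pe n r) = N1 * Suc r"
    using card_U[of n r "\<lambda>_. True"] by (simp add: N1_def)
  have P0: "card (Pe n r) = N0 * (n - r)" by (simp add: card_Pe N0_def)
  have N1p: "N1 > 0" unfolding N1_def using rn by (intro card_slice_pos) simp
  have N0p: "N0 > 0" unfolding N0_def using rn by (intro card_slice_pos) simp
  have nr: "n - r > 0" using rn by simp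
  have "real (card (De n r g)) = real (card U) - real (card L)" using cD cLU by simp
  then have "real (card (De n r g)) / real (card (Pe n r)) =
      real (card U) / real (card (Pe n r)) - real (card L) / real (card (Pe n r))"
    by (simp add: diff_divide_distrib)
  also have "real (card U) / real (card (Pe n r)) = real A1 / real N1"
    unfolding cU P1 of_nat_mult by (rule nonzero_mult_divide_mult_cancel_right) simp
  also have "real (card L) / real (card (Pe n r)) = real A0 / real N0"
    unfolding cL P0 of_nat_mult using nr by (intro nonzero_mult_divide_mult_cancel_right) simp
  finally show ?thesis by (simp add: A1_def A0_def N1_def N0_def)
qed

lemma mono_sum:
  assumes mono: "bool_monotone n g"
  shows "(\<Sum>r<n. real (card (De n r g)) / real (card (Pe n r))) \<le> 1"
proof -
  define a where "a s = real (card {y \<in> slice n s. g y}) / real (card (slice n s))" for s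
  have "(\<Sum>r<n. real (card (De n r g)) / real (card (Pe n r))) = (\<Sum>r<n. a (Suc r) - a r)"
    by (rule sum.cong) (auto simp: a_def De_mono_card[OF mono])
  also have "\<dots> = a n - a 0" by (rule sum_lessThan_telescope)
  also have "a n \<le> 1"
  proof -
    have "card {y \<in> slice n n. g y} \<le> card (slice n n)"
      using finite_slice by (intro card_mono) auto
    moreover have "card (slice n n) > 0" by (rule card_slice_pos) simp
    ultimately show ?thesis by (simp add: a_def)
  qed
  moreover have "a 0 \<ge> 0" by (simp add: a_def)
  ultimately show ?thesis by simp
qed

lemma De_xor:
  assumes pm: "\<forall>x\<in>cube n. f x = 1 \<or> f x = -1" and km: "pm_k_monotone n k f"
  shows "\<exists>gs. (\<forall>j<k. bool_monotone n (gs j)) \<and>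
           (\<forall>r. card (De n r f) \<le> (\<Sum>j<k. card (De n r (gs j))))"
proof -
  obtain gs where gm: "\<forall>j<k. bool_monotone n (gs j)"
    and gx: "\<forall>x\<in>cube n. ((1 - f x) / 2 = 1) = odd (card {j. j < k \<and> gs j x})"
    using km unfolding pm_k_monotone_def k_monotone_def by blast
  have "card (De n r f) \<le> (\<Sum>j<k. card (De n r (gs j)))" for r
  proof -
    have sub: "De n r f \<subseteq> (\<Union>j<k. De n r (gs j))"
    proof
      fix p assume pD: "p \<in> De n r f"
      then obtain x i where p: "p = (x, i)" "x \<in> slice n r" "i < n" "\<not> x i"
        "f (x(i := True)) \<noteq> f x"
        by (cases p) (auto simp: De_def Pe_def)
      have c1: "x \<in> cube n" using p by (simp add: slice_def)
      have c2: "x(i := True) \<in> cube n" using up_slice[OF p(2,3,4)] by (simp add: slice_def)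
      have "((1 - f x) / 2 = 1) \<noteq> ((1 - f (x(i := True))) / 2 = 1)"
      proof -
        have "f x = 1 \<or> f x = -1" "f (x(i := True)) = 1 \<or> f (x(i := True)) = -1"
          using pm c1 c2 by auto
        then show ?thesis using p(5) by (elim disjE) simp_all
      qed
      moreover have "((1 - f x) / 2 = 1) = odd (card {j. j < k \<and> gs j x})"
        using gx c1 by blast
      moreover have "((1 - f (x(i := True))) / 2 = 1) = odd (card {j. j < k \<and> gs j (x(i := True))})"
        using gx c2 by blast
      ultimately have "odd (card {j. j < k \<and> gs j x}) \<noteq> odd (card {j. j < k \<and> gs j (x(i := True))})"
        by simp
      then have "{j. j < k \<and> gs j x} \<noteq> {j. j < k \<and> gs j (x(i := True))}"
        by metis
      then obtain j where j: "j < k" "gs j x \<noteq> gs j (x(i := True))" by blast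
      then have "p \<in> De n r (gs j)" using pD p(1) by (auto simp: De_def)
      then show "p \<in> (\<Union>j<k. De n r (gs j))" using j by blast
    qed
    have "card (De n r f) \<le> card (\<Union>j<k. De n r (gs j))"
      using sub finite_De by (intro card_mono) auto
    also have "\<dots> \<le> (\<Sum>j<k. card (De n r (gs j)))" by (rule card_UN_le) simp
    finally show ?thesis .
  qed
  then show ?thesis using gm by blast
qed


lemma swap_swap: "swap_coords a b (swap_coords a b x) = x"
  by (rule ext) (simp add: swap_coords_def)

lemma swap_comm: "swap_coords i j x = swap_coords j i x"
  by (rule ext) (simp add: swap_coords_def)

lemma swap_same: "x i = x j \<Longrightarrow> swap_coords i j x = x"
  by (rule ext) (simp add: swap_coords_def)

lemma swap_eq: "x a \<Longrightarrow> \<not> x b \<Longrightarrow> swap_coords a b x = (x(b := True))(a := False)"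
  by (rule ext) (auto simp: swap_coords_def)

lemma swap_up: "x a \<Longrightarrow> \<not> x b \<Longrightarrow> (swap_coords a b x)(a := True) = x(b := True)"
  by (rule ext) (auto simp: swap_coords_def)

lemma swap_slice:
  assumes "x \<in> slice n r" "a < n" "b < n" "x a" "\<not> x b"
  shows "swap_coords a b x \<in> slice n r"
proof -
  have ab: "a \<noteq> b" using assms by auto
  have "x(b := True) \<in> slice n (Suc r)" using up_slice assms by blast
  moreover have "(x(b := True)) a" using ab assms by simp
  ultimately have "(x(b := True))(a := False) \<in> slice n r" using down_slice assms by blast
  then show ?thesis using swap_eq assms by simp
qed

lemma key_edge:
  assumes "x \<in> slice n r" "a < n" "b < n" "x a" "\<not> x b" "f (swap_coords a b x) \<noteq> f x"
  shows "(x, b) \<in> De n r f \<or> (swap_coords a b x, a) \<in> De n r f"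
proof -
  have P1: "(x, b) \<in> Pe n r" using assms by (simp add: Pe_def)
  have ws: "swap_coords a b x \<in> slice n r" using swap_slice assms by blast
  have wa: "\<not> swap_coords a b x a" using assms by (simp add: swap_coords_def)
  have P2: "(swap_coords a b x, a) \<in> Pe n r" using ws wa assms by (simp add: Pe_def)
  have up: "(swap_coords a b x)(a := True) = x(b := True)" using swap_up assms by blast
  show ?thesis
  proof (cases "f (x(b := True)) = f x")
    case True
    then have "f ((swap_coords a b x)(a := True)) \<noteq> f (swap_coords a b x)"
      using up assms(6) by simp
    then show ?thesis using P2 by (simp add: De_def)
  next
    case False
    then show ?thesis using P1 by (simp add: De_def)
  qed
qed

lemma card_as_sum: "finite S \<Longrightarrow> card {x \<in> S. P x} = (\<Sum>x\<in>S. of_bool (P x) :: nat)"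
proof -
  assume "finite S"
  moreover have "S \<inter> {x. P x} = {x \<in> S. P x}" by auto
  ultimately show ?thesis by simp
qed

lemma count_H:
  assumes D: "D \<subseteq> Sigma (slice n r) (\<lambda>_. {..<n})"
  shows "(\<Sum>a<n. \<Sum>b<n. card {x \<in> slice n r. x a \<and> (x, b) \<in> D}) = r * card D"
proof -
  let ?S = "slice n r"
  have fS: "finite ?S" by (rule finite_slice)
  have "(\<Sum>a<n. \<Sum>b<n. card {x \<in> ?S. x a \<and> (x, b) \<in> D})
      = (\<Sum>a<n. \<Sum>b<n. \<Sum>x\<in>?S. of_bool (x a) * of_bool ((x, b) \<in> D))"
    by (simp only: card_as_sum[OF fS] of_bool_conj)
  also have "\<dots> = (\<Sum>a<n. \<Sum>x\<in>?S. \<Sum>b<n. of_bool (x a) * of_bool ((x, b) \<in> D))"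
    by (rule sum.cong[OF refl], rule sum.swap)
  also have "\<dots> = (\<Sum>x\<in>?S. \<Sum>a<n. \<Sum>b<n. of_bool (x a) * of_bool ((x, b) \<in> D))"
    by (rule sum.swap)
  also have "\<dots> = (\<Sum>x\<in>?S. (\<Sum>a<n. of_bool (x a)) * (\<Sum>b<n. of_bool ((x, b) \<in> D)))"
    by (rule sum.cong[OF refl]) (rule sum_product[symmetric])
  also have "\<dots> = (\<Sum>x\<in>?S. r * (\<Sum>b<n. of_bool ((x, b) \<in> D)))"
  proof (rule sum.cong[OF refl])
    fix x assume x: "x \<in> ?S"
    have "(\<Sum>a<n. of_bool (x a) :: nat) = card {a \<in> {..<n}. x a}"
      by (simp only: card_as_sum[OF finite_lessThan])
    also have "{a \<in> {..<n}. x a} = {i. i < n \<and> x i}" by auto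
    also have "card \<dots> = r" using x by (simp add: slice_def)
    finally show "(\<Sum>a<n. of_bool (x a)) * (\<Sum>b<n. of_bool ((x, b) \<in> D)) = r * (\<Sum>b<n. of_bool ((x, b) \<in> D))"
      by simp
  qed
  also have "\<dots> = r * (\<Sum>x\<in>?S. \<Sum>b<n. of_bool ((x, b) \<in> D))"
    by (simp add: sum_distrib_left)
  also have "(\<Sum>x\<in>?S. \<Sum>b<n. of_bool ((x, b) \<in> D)) = (\<Sum>p\<in>?S \<times> {..<n}. of_bool (p \<in> D) :: nat)"
    by (rule sum.cartesian_product'[symmetric])
  also have "\<dots> = card {p \<in> ?S \<times> {..<n}. p \<in> D}"
    using fS by (simp add: card_as_sum)
  also have "{p \<in> ?S \<times> {..<n}. p \<in> D} = D" using D by auto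
  finally show ?thesis .
qed

lemma reindex_pairs:
  fixes G :: "nat \<Rightarrow> nat \<Rightarrow> nat"
  assumes "\<And>a. G a a = 0"
  shows "(\<Sum>j<n. \<Sum>i<j. G i j + G j i) = (\<Sum>a<n. \<Sum>b<n. G a b)"
proof (induction n)
  case 0 then show ?case by simp
next
  case (Suc n)
  have "(\<Sum>a<Suc n. \<Sum>b<Suc n. G a b) = (\<Sum>a<n. \<Sum>b<n. G a b) + (\<Sum>a<n. G a n) + (\<Sum>b<n. G n b) + G n n"
    by (simp add: sum.distrib)
  then show ?case using Suc assms by (simp add: sum.distrib)
qed

lemma swap_total:
  "(\<Sum>j<n. \<Sum>i<j. card {x \<in> slice n r. f (swap_coords i j x) \<noteq> f x}) \<le> 2 * r * card (De n r f)"
proof -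
  let ?S = "slice n r"
  let ?D = "De n r f"
  have fS: "finite ?S" by (rule finite_slice)
  define G where "G a b = card {x \<in> ?S. x a \<and> \<not> x b \<and> f (swap_coords a b x) \<noteq> f x}" for a b
  define X where "X a b = card {x \<in> ?S. x a \<and> (x, b) \<in> ?D}" for a b
  define Y where "Y a b = card {w \<in> ?S. w b \<and> (w, a) \<in> ?D}" for a b
  have DS: "?D \<subseteq> Sigma ?S (\<lambda>_. {..<n})" by (auto simp: De_def Pe_def)
  have s1: "card {x \<in> ?S. f (swap_coords i j x) \<noteq> f x} \<le> G i j + G j i" for i j
  proof -
    have "{x \<in> ?S. f (swap_coords i j x) \<noteq> f x} \<subseteq>
        {x \<in> ?S. x i \<and> \<not> x j \<and> f (swap_coords i j x) \<noteq> f x} \<union>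
        {x \<in> ?S. x j \<and> \<not> x i \<and> f (swap_coords j i x) \<noteq> f x}"
    proof
      fix x assume x: "x \<in> {x \<in> ?S. f (swap_coords i j x) \<noteq> f x}"
      then have "x i \<noteq> x j" using swap_same by force
      then show "x \<in> {x \<in> ?S. x i \<and> \<not> x j \<and> f (swap_coords i j x) \<noteq> f x} \<union>
        {x \<in> ?S. x j \<and> \<not> x i \<and> f (swap_coords j i x) \<noteq> f x}"
        using x swap_comm[of i j x] by auto
    qed
    then have "card {x \<in> ?S. f (swap_coords i j x) \<noteq> f x} \<le>
        card ({x \<in> ?S. x i \<and> \<not> x j \<and> f (swap_coords i j x) \<noteq> f x} \<union>
        {x \<in> ?S. x j \<and> \<not> x i \<and> f (swap_coords j i x) \<noteq> f x})"
      using fS by (intro card_mono) auto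
    also have "\<dots> \<le> G i j + G j i" unfolding G_def by (rule card_Un_le)
    finally show ?thesis .
  qed
  have s3: "G a b \<le> X a b + Y a b" if ab: "a < n" "b < n" for a b
  proof -
    have "{x \<in> ?S. x a \<and> \<not> x b \<and> f (swap_coords a b x) \<noteq> f x} \<subseteq>
        {x \<in> ?S. x a \<and> (x, b) \<in> ?D} \<union> {x \<in> ?S. x a \<and> \<not> x b \<and> (swap_coords a b x, a) \<in> ?D}"
      using key_edge[of _ n r a b f] ab by blast
    then have "G a b \<le> card ({x \<in> ?S. x a \<and> (x, b) \<in> ?D} \<union> {x \<in> ?S. x a \<and> \<not> x b \<and> (swap_coords a b x, a) \<in> ?D})"
      unfolding G_def using fS by (intro card_mono) auto
    also have "\<dots> \<le> X a b + card {x \<in> ?S. x a \<and> \<not> x b \<and> (swap_coords a b x, a) \<in> ?D}"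
      unfolding X_def by (rule card_Un_le)
    also have "card {x \<in> ?S. x a \<and> \<not> x b \<and> (swap_coords a b x, a) \<in> ?D} \<le> Y a b"
      unfolding Y_def
    proof (rule card_inj_on_le[where f="swap_coords a b"])
      show "inj_on (swap_coords a b) {x \<in> ?S. x a \<and> \<not> x b \<and> (swap_coords a b x, a) \<in> ?D}"
        by (metis (no_types, lifting) inj_onI swap_swap)
      show "swap_coords a b ` {x \<in> ?S. x a \<and> \<not> x b \<and> (swap_coords a b x, a) \<in> ?D}
          \<subseteq> {w \<in> ?S. w b \<and> (w, a) \<in> ?D}"
      proof
        fix w assume "w \<in> swap_coords a b ` {x \<in> ?S. x a \<and> \<not> x b \<and> (swap_coords a b x, a) \<in> ?D}"
        then obtain x where x: "x \<in> ?S" "x a" "\<not> x b" "(swap_coords a b x, a) \<in> ?D"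
          "w = swap_coords a b x" by blast
        have "w \<in> ?S" using swap_slice[OF x(1) ab x(2,3)] x(5) by simp
        moreover have "w b" using x by (auto simp: swap_coords_def)
        ultimately show "w \<in> {w \<in> ?S. w b \<and> (w, a) \<in> ?D}" using x by simp
      qed
      show "finite {w \<in> ?S. w b \<and> (w, a) \<in> ?D}" using fS by simp
    qed
    finally show ?thesis by simp
  qed
  have "(\<Sum>j<n. \<Sum>i<j. card {x \<in> ?S. f (swap_coords i j x) \<noteq> f x}) \<le> (\<Sum>j<n. \<Sum>i<j. G i j + G j i)"
    by (intro sum_mono s1)
  also have "\<dots> = (\<Sum>a<n. \<Sum>b<n. G a b)"
  proof (rule reindex_pairs)
    fix a
    have "{x \<in> ?S. x a \<and> \<not> x a \<and> f (swap_coords a a x) \<noteq> f x} = {}" by blast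
    then show "G a a = 0" unfolding G_def by (simp only: card.empty)
  qed
  also have "\<dots> \<le> (\<Sum>a<n. \<Sum>b<n. X a b + Y a b)"
    by (intro sum_mono s3) auto
  also have "\<dots> = (\<Sum>a<n. \<Sum>b<n. X a b) + (\<Sum>a<n. \<Sum>b<n. Y a b)"
    by (simp add: sum.distrib)
  also have "(\<Sum>a<n. \<Sum>b<n. X a b) = r * card ?D"
    unfolding X_def by (rule count_H[OF DS])
  also have "(\<Sum>a<n. \<Sum>b<n. Y a b) = (\<Sum>b<n. \<Sum>a<n. Y a b)" by (rule sum.swap)
  also have "\<dots> = r * card ?D"
    unfolding Y_def by (rule count_H[OF DS])
  finally show ?thesis by simp
qed


lemma slice_bound:
  assumes rn: "r < n"
  shows "slice_total_inf n r f \<le> real n * (real (card (De n r f)) / real (card (Pe n r)))"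
proof -
  define N where "N = card (slice n r)"
  define d where "d = card (De n r f)"
  define C where "C = (\<Sum>j<n. \<Sum>i<j. card {x \<in> slice n r. f (swap_coords i j x) \<noteq> f x})"
  have Np: "N > 0" unfolding N_def using rn by (intro card_slice_pos) simp
  have np: "n > 0" using rn by simp
  have C: "C \<le> 2 * r * d" unfolding C_def d_def by (rule swap_total)
  have eq: "slice_total_inf n r f = 2 * real C / (real n * real N)"
    unfolding slice_total_inf_def slice_inf_ij_def C_def N_def
    by (simp add: of_nat_sum sum_divide_distrib sum_distrib_left)
  have "2 * real C / (real n * real N) \<le> 2 * (2 * real r * real d) / (real n * real N)"
  proof -
    have "real C \<le> real (2 * r * d)" using C by (simp only: of_nat_le_iff)
    then have "real C \<le> 2 * real r * real d" by simp
    then show ?thesis using Np np by (intro divide_right_mono) (simp_all add: algebra_simps)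
  qed
  also have "\<dots> \<le> real n * (real d / (real N * real (n - r)))"
  proof -
    have q: "4 * real r * (real n - real r) \<le> real n * real n"
    proof -
      have "0 \<le> (real n - 2 * real r) ^ 2" by simp
      then show ?thesis by (simp add: power2_eq_square algebra_simps)
    qed
    have nr: "real (n - r) = real n - real r" using rn by simp
    have pos: "real n - real r > 0" using rn by simp
    have "2 * (2 * real r * real d) / (real n * real N) = (4 * real r * (real n - real r)) * real d / (real n * real N * (real n - real r))"
    proof -
      define t where "t = real n - real r"
      have t0: "t \<noteq> 0" using pos by (simp add: t_def)
      have "2 * (2 * real r * real d) / (real n * real N) = (2 * (2 * real r * real d) * t) / (real n * real N * t)"
        using t0 by simp
      also have "\<dots> = (4 * real r * t) * real d / (real n * real N * t)"
        by (simp add: algebra_simps)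
      finally show ?thesis by (simp add: t_def)
    qed
    also have "\<dots> \<le> (real n * real n) * real d / (real n * real N * (real n - real r))"
      using q pos Np np by (intro divide_right_mono mult_right_mono) simp_all
    also have "\<dots> = real n * (real d / (real N * real (n - r)))"
    proof -
      define t where "t = real n - real r"
      have n0: "real n \<noteq> 0" using np by simp
      have "(real n * real n) * real d / (real n * real N * t) = (real n * real d * real n) / (real N * t * real n)"
        by (simp add: algebra_simps)
      also have "\<dots> = (real n * real d) / (real N * t)"
        using n0 by (rule nonzero_mult_divide_mult_cancel_right)
      also have "\<dots> = real n * (real d / (real N * real (n - r)))"
        using nr by (simp add: t_def)
      finally show ?thesis by (simp add: t_def)
    qed
    finally show ?thesis .
  qed
  finally show ?thesis using eq by (simp add: d_def N_def card_Pe)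
qed

theorem proposition1:
  fixes n k :: nat and f :: "(nat \<Rightarrow> bool) \<Rightarrow> real"
  assumes "\<forall>x\<in>cube n. f x = 1 \<or> f x = -1"
    and "pm_k_monotone n k f"
  shows "(\<Sum>r<n. slice_total_inf n r f) \<le> real k * real n"
proof -
  obtain gs where gm: "\<forall>j<k. bool_monotone n (gs j)"
    and gc: "\<forall>r. card (De n r f) \<le> (\<Sum>j<k. card (De n r (gs j)))"
    using De_xor[OF assms] by blast
  have "(\<Sum>r<n. slice_total_inf n r f) \<le> (\<Sum>r<n. real n * (real (card (De n r f)) / real (card (Pe n r))))"
    by (intro sum_mono slice_bound) simp
  also have "\<dots> = real n * (\<Sum>r<n. real (card (De n r f)) / real (card (Pe n r)))"
    by (simp add: sum_distrib_left)
  finally have A: "(\<Sum>r<n. slice_total_inf n r f) \<le> real n * (\<Sum>r<n. real (card (De n r f)) / real (card (Pe n r)))" .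
  have "(\<Sum>r<n. real (card (De n r f)) / real (card (Pe n r))) \<le>
      (\<Sum>r<n. \<Sum>j<k. real (card (De n r (gs j))) / real (card (Pe n r)))"
  proof (intro sum_mono)
    fix r
    have "real (card (De n r f)) \<le> (\<Sum>j<k. real (card (De n r (gs j))))"
      using gc of_nat_mono[OF gc[rule_format, of r]] by (simp add: of_nat_sum)
    then show "real (card (De n r f)) / real (card (Pe n r)) \<le>
      (\<Sum>j<k. real (card (De n r (gs j))) / real (card (Pe n r)))"
      by (simp add: sum_divide_distrib[symmetric] divide_right_mono)
  qed
  also have "(\<Sum>r<n. \<Sum>j<k. real (card (De n r (gs j))) / real (card (Pe n r))) =
      (\<Sum>j<k. \<Sum>r<n. real (card (De n r (gs j))) / real (card (Pe n r)))"
    by (rule sum.swap)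
  also have "\<dots> \<le> (\<Sum>j<k. 1)"
    using gm by (intro sum_mono mono_sum) simp
  finally have B: "(\<Sum>r<n. real (card (De n r f)) / real (card (Pe n r))) \<le> real k" by simp
  have "real n * (\<Sum>r<n. real (card (De n r f)) / real (card (Pe n r))) \<le> real n * real k"
    using B by (intro mult_left_mono) simp_all
  then show ?thesis using A by (simp add: mult.commute)
qed

end
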